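(* For all $m,n\ge1$ and all $\tilde x=(x_1,\dots,x_m)\in\mathbb{N}^m$, $\tilde y=(y_1,\dots,y_n)\in\mathbb{N}^n$, $$\log 2\le \frac{\mu(I(\tilde x,\tilde y))}{\mu(I(\tilde x))\,\mu(I(\tilde y))}\le 2\log 2,$$ where $(\tilde x,\tilde y)=(x_1,\dots,x_m,y_1,\dots,y_n)$. Moreover both bounds are optimal (i.e., the constants $\log 2$ and $2\log2$ cannot be replaced by any larger, respectively smaller, constants).
   Context: $\mu$ is the Gauss measure on $(0,1)$, $d\mu(\omega)=\frac{d\omega}{(\log 2)(1+\omega)}$. For $(a_1,\dots,a_n)\in\mathbb{N}^n$, the cylinder $I(a_1,\dots,a_n)$ is the set of $\omega\in(0,1)$ whose continued fraction expansion $\omega=\cfrac{1}{a_1(\omega)+\cfrac{1}{a_2(\omega)+\cdots}}$ begins with $a_1,\dots,a_n$. *)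

theory Defs
  imports "HOL-Analysis.Analysis"
begin

text \<open>Gauss map T(x) = 1/x - floor(1/x) on (0,1); the n-th partial quotient
 (0-indexed) of x is a_{n+1}(x) = floor(1 / T^n(x)).\<close>
definition gauss_map :: "real \<Rightarrow> real" where
  "gauss_map x = frac (1 / x)"

definition cf_digit :: "nat \<Rightarrow> real \<Rightarrow> int" where
  "cf_digit k x = \<lfloor>1 / (gauss_map ^^ k) x\<rfloor>"

definition cylinder :: "nat list \<Rightarrow> real set" where
  "cylinder as = {w \<in> {0<..<1}. \<forall>i < length as. cf_digit i w = int (as ! i)}"

definition gauss_measure :: "real measure" where
  "gauss_measure = density lborel
     (\<lambda>w. ennreal (indicator {0<..<1} w / (ln 2 * (1 + w))))"

definition gauss_ratio :: "nat list \<Rightarrow> nat list \<Rightarrow> real" where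
  "gauss_ratio xs ys = measure gauss_measure (cylinder (xs @ ys)) /
      (measure gauss_measure (cylinder xs) * measure gauss_measure (cylinder ys))"

definition admissible :: "nat list \<Rightarrow> bool" where
  "admissible xs \<longleftrightarrow> length xs \<ge> 1 \<and> (\<forall>i < length xs. xs ! i \<ge> 1)"

end

theory Submission
  imports Defs "HOL-Real_Asymp.Real_Asymp"
begin


lemma cf_digit_Suc: "cf_digit (Suc i) w = cf_digit i (gauss_map w)"
  unfolding cf_digit_def by (simp only: funpow_Suc_right comp_def)

lemma cf_digit_0: "cf_digit 0 w = \<lfloor>1/w\<rfloor>"
  unfolding cf_digit_def by simp

definition pos_list :: "nat list \<Rightarrow> bool" where
  "pos_list xs \<longleftrightarrow> (\<forall>i < length xs. xs ! i \<ge> 1)"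

lemma cylinder_single: "cylinder [a] = {w \<in> {0<..<1}. \<lfloor>1/w\<rfloor> = int a}"
  unfolding cylinder_def by (auto simp: cf_digit_0)

lemma cylinder_Cons:
  assumes a: "a \<ge> 1" and ne: "as \<noteq> []" and pos: "pos_list as"
  shows "cylinder (a # as) = (\<lambda>u. 1 / (real a + u)) ` cylinder as"
proof
  show "cylinder (a # as) \<subseteq> (\<lambda>u. 1 / (real a + u)) ` cylinder as"
  proof
    fix w assume w: "w \<in> cylinder (a # as)"
    hence w01: "0 < w" "w < 1" and dig: "\<And>i. i < Suc (length as) \<Longrightarrow> cf_digit i w = int ((a#as) ! i)"
      unfolding cylinder_def by auto
    have fl: "\<lfloor>1/w\<rfloor> = int a" using dig[of 0] by (simp add: cf_digit_0)
    define u where "u = gauss_map w"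
    have u_eq: "u = 1/w - real a" unfolding u_def gauss_map_def frac_def using fl by simp
    have u0: "u \<ge> 0" "u < 1" unfolding u_def gauss_map_def by (auto simp: frac_lt_1)
    have digu: "cf_digit i u = int (as ! i)" if "i < length as" for i
      using dig[of "Suc i"] that by (simp add: cf_digit_Suc u_def)
    have "as ! 0 \<ge> 1" using pos ne unfolding pos_list_def by auto
    with digu[of 0] ne have "u \<noteq> 0" by (auto simp: cf_digit_0)
    with u0 have "u \<in> cylinder as" unfolding cylinder_def using digu by auto
    moreover have "w = 1 / (real a + u)" using u_eq w01 by simp
    ultimately show "w \<in> (\<lambda>u. 1 / (real a + u)) ` cylinder as" by blast
  qed
next
  show "(\<lambda>u. 1 / (real a + u)) ` cylinder as \<subseteq> cylinder (a # as)"
  proof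
    fix w assume "w \<in> (\<lambda>u. 1 / (real a + u)) ` cylinder as"
    then obtain u where u: "u \<in> cylinder as" and w: "w = 1 / (real a + u)" by blast
    hence u01: "0 < u" "u < 1" and digu: "\<And>i. i < length as \<Longrightarrow> cf_digit i u = int (as ! i)"
      unfolding cylinder_def by auto
    have ra: "real a \<ge> 1" using a by simp
    have gt1: "real a + u > 1" using u01 ra by simp
    have w01: "0 < w" "w < 1" using gt1 w by auto
    have inv: "1/w = real a + u" using w u01 ra by simp
    have fl: "\<lfloor>1/w\<rfloor> = int a" unfolding inv using u01 by (simp add: floor_eq_iff)
    have gm: "gauss_map w = u" unfolding gauss_map_def frac_def using fl inv by simp
    have "cf_digit i w = int ((a#as) ! i)" if "i < length (a#as)" for i
    proof (cases i)
      case 0 thus ?thesis using fl by (simp add: cf_digit_0)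
    next
      case (Suc j) thus ?thesis using that digu[of j] gm by (simp add: cf_digit_Suc)
    qed
    thus "w \<in> cylinder (a # as)" unfolding cylinder_def using w01 by auto
  qed
qed




primrec psi :: "nat list \<Rightarrow> real \<Rightarrow> real" where
  "psi [] t = t"
| "psi (a # as) t = 1 / (real a + psi as t)"

lemma psi_append: "psi (xs @ ys) t = psi xs (psi ys t)"
  by (induct xs) auto

definition pl :: "nat list \<Rightarrow> bool" where "pl xs \<longleftrightarrow> (\<forall>x\<in>set xs. x \<ge> 1)"

lemma pl_pos_list: "pl xs \<Longrightarrow> pos_list xs"
  unfolding pl_def pos_list_def by auto

lemma admissible_iff: "admissible xs \<longleftrightarrow> xs \<noteq> [] \<and> pl xs"
  unfolding admissible_def pl_def all_set_conv_all_nth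
  by (metis One_nat_def Suc_leI le_numeral_extra(4) length_0_conv length_greater_0_conv not_one_le_zero)

lemma psi_range: "pl zs \<Longrightarrow> 0 \<le> t \<Longrightarrow> t \<le> 1 \<Longrightarrow> 0 \<le> psi zs t \<and> psi zs t \<le> 1"
proof (induct zs)
  case Nil thus ?case by simp
next
  case (Cons a zs)
  hence "real a \<ge> 1" "0 \<le> psi zs t" by (auto simp: pl_def)
  thus ?case by simp
qed

lemma psi_pos: "pl zs \<Longrightarrow> zs \<noteq> [] \<Longrightarrow> 0 \<le> t \<Longrightarrow> t \<le> 1 \<Longrightarrow> 0 < psi zs t"
proof (cases zs)
  case (Cons a as)
  assume "pl zs" "0 \<le> t" "t \<le> 1"
  with Cons have "real a \<ge> 1" "0 \<le> psi as t" using psi_range[of as t] by (auto simp: pl_def)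
  thus ?thesis using Cons by simp
qed simp

lemma phi_sign:
  fixes a u x y :: real
  assumes "a > 0" "u \<ge> 0" "x \<ge> 0" "y \<ge> 0"
  shows "(1/(a+u) - 1/(a+x)) * (1/(a+u) - 1/(a+y)) = (u - x) * (u - y) / ((a+u)^2 * (a+x) * (a+y))"
  using assms by (simp add: field_simps power2_eq_square)

lemma cyl_between:
  assumes "zs \<noteq> []" "pl zs"
  shows "(\<forall>w. (w - psi zs 0) * (w - psi zs 1) < 0 \<longrightarrow> w \<in> cylinder zs) \<and>
         (\<forall>w\<in>cylinder zs. (w - psi zs 0) * (w - psi zs 1) \<le> 0)"
  using assms
proof (induct zs rule: list_nonempty_induct)
  case (single a)
  hence ra: "real a \<ge> 1" by (simp add: pl_def)
  have "w \<in> cylinder [a]" if "(w - psi [a] 0) * (w - psi [a] 1) < 0" for w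
  proof -
    have "(w - 1/real a) * (w - 1/(real a + 1)) < 0" using that by simp
    moreover have "1/(real a + 1) < 1/real a" using ra by (simp add: field_simps)
    ultimately have "1/(real a + 1) < w \<and> w < 1/real a"
      by (auto simp: mult_less_0_iff)
    hence w: "1/(real a + 1) < w" "w < 1/real a" by auto
    have w0: "w > 0" using w(1) ra by (smt (verit) divide_pos_pos)
    have "1/real a \<le> 1" using ra by simp
    hence w1: "w < 1" using w by simp
    have "real a < 1/w" using w(2) w0 ra by (simp add: field_simps)
    moreover have "1/w < real a + 1" using w(1) w0 ra by (simp add: field_simps)
    ultimately have "\<lfloor>1/w\<rfloor> = int a" by (simp add: floor_eq_iff)
    thus ?thesis using w0 w1 by (simp add: cylinder_single)
  qed
  moreover have "(w - psi [a] 0) * (w - psi [a] 1) \<le> 0" if "w \<in> cylinder [a]" for w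
  proof -
    from that have w0: "0 < w" and fl: "\<lfloor>1/w\<rfloor> = int a" by (auto simp: cylinder_single)
    hence "real a \<le> 1/w" "1/w < real a + 1" by (auto simp: floor_eq_iff)
    hence "w \<le> 1/real a" "1/(real a+1) < w" using w0 ra by (auto simp: field_simps)
    thus ?thesis by (simp add: mult_le_0_iff)
  qed
  ultimately show ?case by blast
next
  case (cons a zs)
  have ra: "real a \<ge> 1" and plz: "pl zs" using cons.prems by (auto simp: pl_def)
  have IH: "\<And>w. (w - psi zs 0) * (w - psi zs 1) < 0 \<Longrightarrow> w \<in> cylinder zs"
           "\<And>w. w \<in> cylinder zs \<Longrightarrow> (w - psi zs 0) * (w - psi zs 1) \<le> 0"
    using cons.hyps(2) plz by auto
  have cyl: "cylinder (a # zs) = (\<lambda>u. 1 / (real a + u)) ` cylinder zs"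
    using cylinder_Cons[of a zs] ra cons.hyps(1) plz pl_pos_list by auto
  define x where "x = psi zs 0"
  define y where "y = psi zs 1"
  have x: "0 < x" "x \<le> 1" using psi_pos[OF plz cons.hyps(1), of 0] psi_range[OF plz, of 0] by (auto simp: x_def)
  have y: "0 < y" "y \<le> 1" using psi_pos[OF plz cons.hyps(1), of 1] psi_range[OF plz, of 1] by (auto simp: y_def)
  have ps: "psi (a#zs) 0 = 1/(real a + x)" "psi (a#zs) 1 = 1/(real a + y)" by (auto simp: x_def y_def)
  have "w \<in> cylinder (a#zs)" if "(w - psi (a#zs) 0) * (w - psi (a#zs) 1) < 0" for w
  proof -
    have h: "(w - 1/(real a + x)) * (w - 1/(real a + y)) < 0" using that ps by simp
    have bx: "0 < 1/(real a + x)" "1/(real a + x) < 1/real a" using x ra by (auto simp: field_simps)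
    have byy: "0 < 1/(real a + y)" "1/(real a + y) < 1/real a" using y ra by (auto simp: field_simps)
    from h have "(1/(real a + x) < w \<and> w < 1/(real a + y)) \<or> (1/(real a + y) < w \<and> w < 1/(real a + x))"
      by (auto simp: mult_less_0_iff)
    hence w0: "0 < w" and wa: "w < 1/real a" using bx byy by (smt (verit))+
    define u where "u = 1/w - real a"
    have u0: "u > 0" using wa w0 ra by (simp add: u_def field_simps)
    have wu: "w = 1/(real a + u)" using w0 by (simp add: u_def)
    have "(u - x) * (u - y) / ((real a+u)^2 * (real a+x) * (real a+y)) < 0"
      using h phi_sign[of "real a" u x y] ra u0 x y wu by simp
    moreover have "(real a+u)^2 * (real a+x) * (real a+y) > 0" using ra u0 x y by simp
    ultimately have "(u - x) * (u - y) < 0" by (simp add: divide_less_0_iff)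
    hence "u \<in> cylinder zs" using IH(1) by (simp add: x_def y_def)
    thus ?thesis unfolding cyl wu by blast
  qed
  moreover have "(w - psi (a#zs) 0) * (w - psi (a#zs) 1) \<le> 0" if "w \<in> cylinder (a#zs)" for w
  proof -
    from that obtain u where u: "u \<in> cylinder zs" and wu: "w = 1/(real a + u)" unfolding cyl by blast
    have u0: "u > 0" using u by (auto simp: cylinder_def)
    have "(u - x) * (u - y) \<le> 0" using IH(2)[OF u] by (simp add: x_def y_def)
    moreover have "(real a+u)^2 * (real a+x) * (real a+y) > 0" using ra u0 x y by simp
    ultimately have "(u - x) * (u - y) / ((real a+u)^2 * (real a+x) * (real a+y)) \<le> 0"
      by (simp add: divide_le_0_iff)
    thus ?thesis using phi_sign[of "real a" u x y] ra u0 x y wu ps by simp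
  qed
  ultimately show ?case by blast
qed




lemma gm_meas[measurable]: "(\<lambda>w. ennreal (indicator {0<..<1} w / (ln 2 * (1 + w)))) \<in> borel_measurable lborel"
  by measurable

lemma sets_gm[simp]: "sets gauss_measure = sets lborel"
  unfolding gauss_measure_def by simp

lemma finite_null_gm: "finite N \<Longrightarrow> N \<in> null_sets gauss_measure"
proof -
  assume N: "finite N"
  have "N \<in> null_sets lborel" using finite_imp_null_set_lborel[OF N] .
  hence ae: "AE x in lborel. x \<notin> N" by (rule AE_not_in)
  show ?thesis unfolding gauss_measure_def
  proof (subst null_sets_density_iff[OF gm_meas], intro conjI)
    show "N \<in> sets lborel" using \<open>N \<in> null_sets lborel\<close> by auto
    show "AE x in lborel. x \<in> N \<longrightarrow> ennreal (indicator {0<..<1} x / (ln 2 * (1 + x))) = 0"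
      using ae by (rule eventually_mono) auto
  qed
qed

lemma gm_Icc:
  assumes "0 \<le> l" "l \<le> r" "r \<le> 1"
  shows "emeasure gauss_measure {l..r} = ennreal ((ln (1+r) - ln (1+l)) / ln 2)"
proof -
  have "emeasure gauss_measure {l..r} =
     (\<integral>\<^sup>+ x. ennreal (indicator {0<..<1} x / (ln 2 * (1 + x))) * indicator {l..r} x \<partial>lborel)"
    unfolding gauss_measure_def by (subst emeasure_density) auto
  also have "\<dots> = (\<integral>\<^sup>+ x. ennreal (1 / (ln 2 * (1 + x))) * indicator {l..r} x \<partial>lborel)"
  proof (rule nn_integral_cong_AE)
    have "{0,1::real} \<in> null_sets lborel" by (rule finite_imp_null_set_lborel) simp
    hence "AE x in lborel. x \<notin> {0,1::real}" by (rule AE_not_in)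
    thus "AE x in lborel. ennreal (indicator {0<..<1} x / (ln 2 * (1 + x))) * indicator {l..r} x =
        ennreal (1 / (ln 2 * (1 + x))) * indicator {l..r} x"
      by (rule eventually_mono) (use assms in \<open>auto split: split_indicator\<close>)
  qed
  also have "\<dots> = ennreal (ln (1+r) / ln 2 - ln (1+l) / ln 2)"
  proof (rule nn_integral_FTC_Icc)
    show "(\<lambda>x::real. 1 / (ln 2 * (1 + x))) \<in> borel_measurable borel" by measurable
    fix x assume x: "x \<in> {l..r}"
    hence "x > -1" using assms by auto
    thus "DERIV (\<lambda>x. ln (1+x) / ln 2) x :> 1 / (ln 2 * (1 + x))"
    proof -
      assume "x > -1"
      have "ln (2::real) > 0" by simp
      have d: "DERIV (\<lambda>x. ln (1+x) / ln 2) x :> (1/(1+x)) / ln 2"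
        using \<open>x > -1\<close> by (auto intro!: derivative_eq_intros)
      have "(1/(1+x)) / ln 2 = 1 / (ln 2 * (1 + x))" by simp
      thus ?thesis using d by (simp add: mult.commute)
    qed
    show "0 \<le> 1 / (ln 2 * (1 + x))" using x assms by auto
  qed (use assms in auto)
  finally show ?thesis by (simp add: diff_divide_distrib)
qed

lemma measure_between:
  assumes lr: "0 \<le> l" "l \<le> r" "r \<le> 1"
    and S1: "\<And>w. l < w \<Longrightarrow> w < r \<Longrightarrow> w \<in> S" and S2: "\<And>w. w \<in> S \<Longrightarrow> l \<le> w \<and> w \<le> r"
  shows "S \<in> sets gauss_measure" "measure gauss_measure S = (ln (1+r) - ln (1+l)) / ln 2"
proof -
  have eq: "S = {l<..<r} \<union> (S \<inter> {l,r})" using S1 S2 by force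
  have "S \<inter> {l,r} \<in> null_sets gauss_measure" by (rule finite_null_gm) simp
  hence "S \<inter> {l,r} \<in> sets gauss_measure" by auto
  hence "{l<..<r} \<union> (S \<inter> {l,r}) \<in> sets gauss_measure" by simp
  thus Ssets: "S \<in> sets gauss_measure" using eq by simp
  have eq2: "{l..r} = S \<union> ({l..r} - S)" using S2 by auto
  have "{l..r} - S \<in> null_sets gauss_measure"
  proof (rule null_sets_subset)
    show "{l, r} \<in> null_sets gauss_measure" by (rule finite_null_gm) simp
    show "{l..r} - S \<in> sets gauss_measure" using Ssets by simp
    show "{l..r} - S \<subseteq> {l, r}" using S1 by force
  qed
  hence "emeasure gauss_measure {l..r} = emeasure gauss_measure S"
    using emeasure_Un_null_set[OF Ssets] eq2 by metis
  hence "emeasure gauss_measure S = ennreal ((ln (1+r) - ln (1+l)) / ln 2)"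
    using gm_Icc[OF lr] by simp
  moreover have "(ln (1+r) - ln (1+l)) / ln 2 \<ge> 0" using lr by simp
  ultimately show "measure gauss_measure S = (ln (1+r) - ln (1+l)) / ln 2"
    unfolding measure_def by simp
qed

lemma measure_cyl:
  assumes "zs \<noteq> []" "pl zs"
  shows "cylinder zs \<in> sets gauss_measure"
    "measure gauss_measure (cylinder zs) = \<bar>ln (1 + psi zs 1) - ln (1 + psi zs 0)\<bar> / ln 2"
proof -
  define x where "x = psi zs 0"
  define y where "y = psi zs 1"
  have x: "0 \<le> x" "x \<le> 1" using psi_range[OF assms(2), of 0] by (auto simp: x_def)
  have y: "0 \<le> y" "y \<le> 1" using psi_range[OF assms(2), of 1] by (auto simp: y_def)
  have cb: "\<And>w. (w - x) * (w - y) < 0 \<Longrightarrow> w \<in> cylinder zs"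
     "\<And>w. w \<in> cylinder zs \<Longrightarrow> (w - x) * (w - y) \<le> 0"
    using cyl_between[OF assms] by (auto simp: x_def y_def)
  have lt: "(w - x) * (w - y) < 0" if "min x y < w" "w < max x y" for w
    using that by (cases "x \<le> y") (auto simp: mult_less_0_iff)
  have le: "min x y \<le> w \<and> w \<le> max x y" if "(w - x) * (w - y) \<le> 0" for w
    using that by (cases "x \<le> y") (auto simp: mult_le_0_iff)
  have lr: "0 \<le> min x y" "min x y \<le> max x y" "max x y \<le> 1" using x y by auto
  note mb = measure_between[OF lr, of "cylinder zs"]
  show "cylinder zs \<in> sets gauss_measure" using mb cb lt le by blast
  have "measure gauss_measure (cylinder zs) = (ln (1 + max x y) - ln (1 + min x y)) / ln 2"
    using mb cb lt le by blast
  also have "ln (1 + max x y) - ln (1 + min x y) = \<bar>ln (1 + y) - ln (1 + x)\<bar>"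
    using x y by (cases "x \<le> y") auto
  finally show "measure gauss_measure (cylinder zs) = \<bar>ln (1 + psi zs 1) - ln (1 + psi zs 0)\<bar> / ln 2"
    by (simp add: x_def y_def)
qed




lemma ln_lower: assumes "(u::real) \<ge> 0" shows "2*u/(2+u) \<le> ln (1+u)"
proof -
  have "(\<lambda>u. ln (1+u) - 2*u/(2+u)) 0 \<le> (\<lambda>u. ln (1+u) - 2*u/(2+u)) u"
  proof (rule DERIV_nonneg_imp_nondecreasing[OF assms])
    fix x :: real assume x: "0 \<le> x" "x \<le> u"
    have d: "DERIV (\<lambda>u. ln (1+u) - 2*u/(2+u)) x :> 1/(1+x) - (2*(2+x) - 2*x)/(2+x)^2"
      using x by (auto intro!: derivative_eq_intros simp: power2_eq_square)
    have "1/(1+x) - (2*(2+x) - 2*x)/(2+x)^2 = x^2 / ((1+x)*(2+x)^2)"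
      using x by (simp add: divide_simps) (simp add: power2_eq_square algebra_simps)
    also have "\<dots> \<ge> 0" using x by simp
    finally show "\<exists>y. DERIV (\<lambda>u. ln (1+u) - 2*u/(2+u)) x :> y \<and> y \<ge> 0" using d by blast
  qed
  thus ?thesis by simp
qed

lemma key_ineq:
  fixes X Y X' Y' t :: real
  assumes X: "X > 0" "0 \<le> X'" "X' \<le> X" and Y: "Y > 0" "0 \<le> Y'" "Y' \<le> Y"
    and rel: "Y * X' - X * Y' = 1" and t: "0 \<le> t" "t \<le> 1"
  defines "J \<equiv> ln (1 + 1/(X*(Y+Y')))"
  shows "J * ((X+t*X')*(Y+t*Y')) \<le> 1 + t" "1 + t \<le> 2 * J * ((X+t*X')*(Y+t*Y'))"
proof -
  define N where "N = X*(Y+Y')"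
  have N: "N > 0" using X Y by (simp add: N_def)
  define u where "u = 1/N"
  have u: "u > 0" using N by (simp add: u_def)
  define P where "P = (X+t*X')*(Y+t*Y')"
  have P: "P > 0" using X Y t by (simp add: P_def add_pos_nonneg)
  have J1: "J \<le> u" unfolding J_def u_def N_def using ln_add_one_self_le_self[of "1/(X*(Y+Y'))"] X Y by simp
  have J2: "2*u/(2+u) \<le> J" unfolding J_def using ln_lower[of u] u by (simp add: u_def N_def)
  have "X + t*X' \<le> (1+t)*X" using mult_right_mono[OF X(3) t(1)] by (simp add: algebra_simps)
  moreover have "Y + t*Y' \<le> Y + Y'" using Y t by (simp add: mult_left_le_one_le)
  ultimately have "P \<le> ((1+t)*X) * (Y+Y')"
    unfolding P_def using X Y t by (intro mult_mono) auto
  hence "u * P \<le> 1 + t" using N unfolding u_def N_def by (simp add: field_simps)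
  moreover have "J * P \<le> u * P" using J1 P by simp
  ultimately show "J * ((X+t*X')*(Y+t*Y')) \<le> 1 + t" unfolding P_def by linarith
  have XY: "X*(Y-Y') \<ge> 1"
  proof -
    have "Y*X' \<le> Y*X" using X Y by (simp add: mult_left_mono)
    thus ?thesis using rel by (simp add: algebra_simps)
  qed
  have iden: "4*P - (1+t)*(2*N+1) - ((1-t)*(2*X*(Y-Y')-1) + t*(4*X*Y'+2) + 4*t^2*X'*Y')
      = 4*t*(Y*X' - X*Y' - 1)"
    unfolding P_def N_def by (simp add: algebra_simps power2_eq_square)
  have "(1-t)*(2*X*(Y-Y')-1) \<ge> 0" using XY t by simp
  moreover have "t*(4*X*Y'+2) \<ge> 0" using X Y t by simp
  moreover have "4*t^2*X'*Y' \<ge> 0" using X Y t by simp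
  moreover have "4*t*(Y*X' - X*Y' - 1) = 0" using rel by simp
  ultimately have f: "(1+t)*(2*N+1) \<le> 4*P" using iden by linarith
  have e2: "2 * (2*u/(2+u)) * P = 4*P/(2*N+1)" using N by (simp add: u_def field_simps)
  have "1+t \<le> 4*P/(2*N+1)" using f N by (simp add: pos_le_divide_eq mult.commute)
  hence "1 + t \<le> 2 * (2*u/(2+u)) * P" using e2 by simp
  also have "\<dots> \<le> 2 * J * P" using mult_right_mono[OF J2, of "2*P"] P by (simp add: algebra_simps)
  finally show "1 + t \<le> 2 * J * ((X+t*X')*(Y+t*Y'))" unfolding P_def .
qed




lemma mono_bounds:
  fixes q q' Q Q' e :: real
  assumes q: "q > 0" "0 \<le> q'" "q' \<le> q" and Q: "Q > 0" "0 \<le> Q'" "Q' \<le> Q"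
    and e: "e = Q'*q - q'*Q" "e = 1 \<or> e = -1"
  defines "L \<equiv> \<lambda>t. ln (Q + t*Q') - ln (q + t*q')"
  defines "J \<equiv> e * (L 1 - L 0)"
  shows "J > 0"
    "\<And>s s'. 0 \<le> s \<Longrightarrow> s \<le> s' \<Longrightarrow> s' \<le> 1 \<Longrightarrow>
       J * (ln (1+s') - ln (1+s)) \<le> e * (L s' - L s) \<and> e * (L s' - L s) \<le> 2 * J * (ln (1+s') - ln (1+s))"
proof -
  have pw: "J * ((q+t*q')*(Q+t*Q')) \<le> 1 + t \<and> 1 + t \<le> 2 * J * ((q+t*q')*(Q+t*Q')) \<and> J > 0"
    if t: "0 \<le> t" "t \<le> 1" for t
  proof (cases "e = 1")
    case True
    have rel: "q * Q' - Q * q' = 1" using e True by (simp add: algebra_simps)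
    have "J = ln (Q+Q') + ln q - ln (q+q') - ln Q" using True by (simp add: J_def L_def)
    also have "\<dots> = ln (((Q+Q')*q) / ((q+q')*Q))" using q Q by (simp add: ln_div ln_mult)
    also have "((Q+Q')*q) / ((q+q')*Q) = 1 + 1/(Q*(q+q'))"
    proof -
      have "Q*q + Q*q' > 0" "(q+q')*Q > 0" using q Q by (auto intro: add_pos_nonneg)
      thus ?thesis using rel q Q by (simp add: field_simps)
    qed
    finally have Jeq: "J = ln (1 + 1/(Q*(q+q')))" .
    note k = key_ineq[OF Q q rel t]
    have "J > 0" unfolding Jeq using q Q by (intro ln_gt_zero) (auto intro: add_pos_nonneg)
    thus ?thesis using k unfolding Jeq by (simp add: mult.commute)
  next
    case False
    hence em: "e = -1" using e by simp
    have rel: "Q * q' - q * Q' = 1" using e em by (simp add: algebra_simps)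
    have "J = ln (q+q') + ln Q - ln (Q+Q') - ln q" using em by (simp add: J_def L_def)
    also have "\<dots> = ln (((q+q')*Q) / ((Q+Q')*q))" using q Q by (simp add: ln_div ln_mult)
    also have "((q+q')*Q) / ((Q+Q')*q) = 1 + 1/(q*(Q+Q'))"
    proof -
      have "q*Q + q*Q' > 0" "(Q+Q')*q > 0" using q Q by (auto intro: add_pos_nonneg)
      thus ?thesis using rel q Q by (simp add: field_simps)
    qed
    finally have Jeq: "J = ln (1 + 1/(q*(Q+Q')))" .
    note k = key_ineq[OF q Q rel t]
    have "J > 0" unfolding Jeq using q Q by (intro ln_gt_zero) (auto intro: add_pos_nonneg)
    thus ?thesis using k unfolding Jeq by simp
  qed
  show "J > 0" using pw[of 0] by simp
  have e2: "e * e = 1" using e(2) by auto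
  have dL: "DERIV (\<lambda>t. e * L t) t :> 1/((q+t*q')*(Q+t*Q'))" if t: "0 \<le> t" for t
  proof -
    have p1: "q + t*q' > 0" "Q + t*Q' > 0" using q Q t by (auto intro: add_pos_nonneg)
    have d: "DERIV (\<lambda>t. e * L t) t :> e * (Q'/(Q+t*Q') - q'/(q+t*q'))"
      unfolding L_def using p1 by (auto intro!: derivative_eq_intros)
    have "Q'/(Q+t*Q') - q'/(q+t*q') = (Q'*q - q'*Q)/((q+t*q')*(Q+t*Q'))"
      using p1 by (simp add: field_simps)
    hence "e * (Q'/(Q+t*Q') - q'/(q+t*q')) = 1/((q+t*q')*(Q+t*Q'))"
      using e(1) e2 by simp
    thus ?thesis using d by simp
  qed
  fix s s' :: real assume s: "0 \<le> s" "s \<le> s'" "s' \<le> 1"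
  have dM: "DERIV (\<lambda>t. ln (1+t)) t :> 1/(1+t)" if "0 \<le> t" for t :: real
  proof -
    have "1 + t > 0" using that by simp
    thus ?thesis by (auto intro!: derivative_eq_intros)
  qed
  have m1: "(\<lambda>t. e * L t - J * ln (1+t)) s \<le> (\<lambda>t. e * L t - J * ln (1+t)) s'"
  proof (rule DERIV_nonneg_imp_nondecreasing[OF s(2)])
    fix x assume x: "s \<le> x" "x \<le> s'"
    hence x0: "0 \<le> x" "x \<le> 1" using s by auto
    have p: "(q+x*q')*(Q+x*Q') > 0" using q Q x0 by (auto intro!: mult_pos_pos add_pos_nonneg)
    have "J * ((q+x*q')*(Q+x*Q')) \<le> 1 + x" using pw[OF x0] by simp
    hence "J/(1+x) \<le> 1/((q+x*q')*(Q+x*Q'))" using p x0 by (simp add: field_simps)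
    thus "\<exists>y. DERIV (\<lambda>t. e * L t - J * ln (1+t)) x :> y \<and> y \<ge> 0"
      using DERIV_diff[OF dL[OF x0(1)] DERIV_cmult[OF dM[OF x0(1)], of J]] by auto
  qed
  have m2: "(\<lambda>t. 2 * J * ln (1+t) - e * L t) s \<le> (\<lambda>t. 2 * J * ln (1+t) - e * L t) s'"
  proof (rule DERIV_nonneg_imp_nondecreasing[OF s(2)])
    fix x assume x: "s \<le> x" "x \<le> s'"
    hence x0: "0 \<le> x" "x \<le> 1" using s by auto
    have p: "(q+x*q')*(Q+x*Q') > 0" using q Q x0 by (auto intro!: mult_pos_pos add_pos_nonneg)
    have "1 + x \<le> 2 * J * ((q+x*q')*(Q+x*Q'))" using pw[OF x0] by simp
    hence "1/((q+x*q')*(Q+x*Q')) \<le> 2 * J * (1/(1+x))" using p x0 by (simp add: field_simps)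
    thus "\<exists>y. DERIV (\<lambda>t. 2 * J * ln (1+t) - e * L t) x :> y \<and> y \<ge> 0"
      using DERIV_diff[OF DERIV_cmult[OF dM[OF x0(1)], of "2*J"] dL[OF x0(1)]] by auto
  qed
  show "J * (ln (1+s') - ln (1+s)) \<le> e * (L s' - L s) \<and> e * (L s' - L s) \<le> 2 * J * (ln (1+s') - ln (1+s))"
    using m1 m2 by (simp add: algebra_simps)
qed




fun mob :: "nat list \<Rightarrow> real \<times> real \<times> real \<times> real" where
  "mob [] = (0, 1, 1, 0)"
| "mob (a # as) = (case mob as of (A, B, C, D) \<Rightarrow> (C, D, real a * C + A, real a * D + B))"

lemma mob_props:
  assumes "pl zs" "mob zs = (A, B, C, D)"
  shows "0 \<le> A \<and> 0 \<le> B \<and> 1 \<le> C \<and> 0 \<le> D \<and> (B*C - A*D = 1 \<or> B*C - A*D = -1) \<and>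
         (zs \<noteq> [] \<longrightarrow> B \<le> A \<and> D \<le> C) \<and> (\<forall>t\<ge>0. psi zs t = (A + t*B)/(C + t*D))"
  using assms
proof (induct zs arbitrary: A B C D)
  case Nil thus ?case by auto
next
  case (Cons a as)
  obtain A0 B0 C0 D0 where m: "mob as = (A0, B0, C0, D0)" by (cases "mob as") auto
  have ra: "real a \<ge> 1" and pla: "pl as" using Cons.prems by (auto simp: pl_def)
  have IH: "0 \<le> A0 \<and> 0 \<le> B0 \<and> 1 \<le> C0 \<and> 0 \<le> D0 \<and> (B0*C0 - A0*D0 = 1 \<or> B0*C0 - A0*D0 = -1) \<and>
         (as \<noteq> [] \<longrightarrow> B0 \<le> A0 \<and> D0 \<le> C0) \<and> (\<forall>t\<ge>0. psi as t = (A0 + t*B0)/(C0 + t*D0))"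
    using Cons.hyps[OF pla m] .
  have eqs: "A = C0" "B = D0" "C = real a * C0 + A0" "D = real a * D0 + B0"
    using Cons.prems(2) m by auto
  have "real a * C0 \<ge> 1 * 1" using IH ra by (intro mult_mono) auto
  hence c1: "1 \<le> real a * C0 + A0" using IH by linarith
  have det: "D0 * (real a * C0 + A0) - C0 * (real a * D0 + B0) = -(B0*C0 - A0*D0)"
    by (simp add: algebra_simps)
  have BA: "D0 \<le> C0 \<and> real a * D0 + B0 \<le> real a * C0 + A0"
  proof (cases "as = []")
    case True thus ?thesis using m ra by auto
  next
    case False
    hence "B0 \<le> A0" "D0 \<le> C0" using IH by auto
    moreover have "real a * D0 \<le> real a * C0" using \<open>D0 \<le> C0\<close> ra by (intro mult_left_mono) auto
    ultimately show ?thesis by linarith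
  qed
  have ps: "psi (a#as) t = (A + t*B)/(C + t*D)" if t: "t \<ge> 0" for t
  proof -
    have "t*D0 \<ge> 0" using IH t by simp
    hence p: "C0 + t*D0 > 0" using IH by linarith
    have "psi (a#as) t = 1 / (real a + (A0 + t*B0)/(C0 + t*D0))" using IH t by simp
    also have "\<dots> = (C0 + t*D0) / (real a * C0 + A0 + t * (real a * D0 + B0))"
      using p by (simp add: field_simps)
    finally show ?thesis using eqs by simp
  qed
  have d2: "B*C - A*D = 1 \<or> B*C - A*D = -1" using det IH unfolding eqs by linarith
  show ?case unfolding eqs using IH c1 d2[unfolded eqs] BA ps[unfolded eqs] by auto
qed

lemma ratio_bounds:
  assumes xs: "admissible xs" and ys: "admissible ys"
  shows "ln 2 \<le> gauss_ratio xs ys \<and> gauss_ratio xs ys \<le> 2 * ln 2"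
proof -
  have xne: "xs \<noteq> []" "pl xs" and yne: "ys \<noteq> []" "pl ys" using xs ys by (auto simp: admissible_iff)
  have xyne: "xs @ ys \<noteq> []" "pl (xs @ ys)" using xne yne by (auto simp: pl_def)
  obtain A B C D where mx: "mob xs = (A, B, C, D)" by (cases "mob xs") auto
  obtain A2 B2 C2 D2 where my: "mob ys = (A2, B2, C2, D2)" by (cases "mob ys") auto
  note px = mob_props[OF xne(2) mx] and py = mob_props[OF yne(2) my]
  define q where "q = C"
  define q' where "q' = D"
  define Q where "Q = A + C"
  define Q' where "Q' = B + D"
  define e where "e = Q'*q - q'*Q"
  have qs: "q > 0" "0 \<le> q'" "q' \<le> q" using px xne by (auto simp: q_def q'_def)
  have Qs: "Q > 0" "0 \<le> Q'" "Q' \<le> Q" using px xne by (auto simp: Q_def Q'_def)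
  have ee: "e = 1 \<or> e = -1" using px by (auto simp: e_def q_def q'_def Q_def Q'_def algebra_simps)
  define L where "L = (\<lambda>t. ln (Q + t*Q') - ln (q + t*q'))"
  define J where "J = e * (L 1 - L 0)"
  note mb0 = mono_bounds[OF qs Qs e_def ee]
  have mb1: "J > 0" using mb0(1) unfolding J_def L_def by simp
  have mb2: "J * (ln (1+s') - ln (1+s)) \<le> e * (L s' - L s) \<and> e * (L s' - L s) \<le> 2 * J * (ln (1+s') - ln (1+s))"
    if "0 \<le> s" "s \<le> s'" "s' \<le> 1" for s s'
    using mb0(2)[OF that] unfolding J_def L_def by simp
  note mb = mb1 mb2
  have Lpsi: "ln (1 + psi xs t) = L t" if "t \<ge> 0" for t
  proof -
    have p: "q + t*q' > 0" "Q + t*Q' > 0" using qs Qs that by (auto intro: add_pos_nonneg)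
    have "1 + psi xs t = (Q + t*Q') / (q + t*q')"
      using px that p by (simp add: Q_def Q'_def q_def q'_def field_simps)
    thus ?thesis using p by (simp add: L_def ln_div)
  qed
  define s0 where "s0 = psi ys 0"
  define s1 where "s1 = psi ys 1"
  have s0: "0 \<le> s0" "s0 \<le> 1" using psi_range[OF yne(2), of 0] by (auto simp: s0_def)
  have s1: "0 \<le> s1" "s1 \<le> 1" using psi_range[OF yne(2), of 1] by (auto simp: s1_def)
  have sne: "s0 \<noteq> s1"
  proof
    assume "s0 = s1"
    hence "A2 / C2 = (A2 + B2) / (C2 + D2)" using py by (simp add: s0_def s1_def)
    moreover have "C2 > 0" "C2 + D2 > 0" using py by auto
    ultimately have "A2 * (C2 + D2) = (A2 + B2) * C2" by (simp add: field_simps)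
    hence "B2*C2 - A2*D2 = 0" by (simp add: algebra_simps)
    thus False using py by auto
  qed
  have mxy: "measure gauss_measure (cylinder (xs @ ys)) = \<bar>L s1 - L s0\<bar> / ln 2"
    using measure_cyl(2)[OF xyne] Lpsi s0 s1 by (simp add: psi_append s0_def s1_def)
  have mxx: "measure gauss_measure (cylinder xs) = \<bar>L 1 - L 0\<bar> / ln 2"
    using measure_cyl(2)[OF xne] Lpsi by simp
  have absJ: "\<bar>L 1 - L 0\<bar> = J"
  proof -
    have "\<bar>L 1 - L 0\<bar> = \<bar>J\<bar>" unfolding J_def using ee by (auto simp: abs_mult)
    thus ?thesis using mb(1) by simp
  qed
  define M where "M = \<bar>ln (1 + s1) - ln (1 + s0)\<bar>"
  have myy: "measure gauss_measure (cylinder ys) = M / ln 2"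
    using measure_cyl(2)[OF yne] by (simp add: M_def s0_def s1_def)
  have Mpos: "M > 0" using sne s0 s1 by (simp add: M_def)
  have bnd: "J * M \<le> \<bar>L s1 - L s0\<bar> \<and> \<bar>L s1 - L s0\<bar> \<le> 2 * J * M"
  proof (cases "s0 \<le> s1")
    case True
    note b = mb(2)[OF s0(1) True s1(2)]
    have "ln (1+s0) \<le> ln (1+s1)" using True s0 by simp
    hence "M = ln (1+s1) - ln (1+s0)" by (simp add: M_def)
    moreover have "\<bar>L s1 - L s0\<bar> = e * (L s1 - L s0)"
    proof -
      have "0 \<le> J * (ln (1+s1) - ln (1+s0))" using mb(1) \<open>ln (1+s0) \<le> ln (1+s1)\<close> by simp
      hence "0 \<le> e * (L s1 - L s0)" using b by linarith
      moreover have "\<bar>L s1 - L s0\<bar> = \<bar>e * (L s1 - L s0)\<bar>" using ee by (auto simp: abs_mult)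
      ultimately show ?thesis by simp
    qed
    ultimately show ?thesis using b by simp
  next
    case False
    hence F: "s1 \<le> s0" by simp
    note b = mb(2)[OF s1(1) F s0(2)]
    have "ln (1+s1) \<le> ln (1+s0)" using F s1 by simp
    hence "M = ln (1+s0) - ln (1+s1)" by (simp add: M_def)
    moreover have "\<bar>L s1 - L s0\<bar> = e * (L s0 - L s1)"
    proof -
      have "0 \<le> J * (ln (1+s0) - ln (1+s1))" using mb(1) \<open>ln (1+s1) \<le> ln (1+s0)\<close> by simp
      hence "0 \<le> e * (L s0 - L s1)" using b by linarith
      moreover have "\<bar>L s1 - L s0\<bar> = \<bar>e * (L s0 - L s1)\<bar>" using ee by (auto simp: abs_mult)
      ultimately show ?thesis by simp
    qed
    ultimately show ?thesis using b by simp
  qed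
  have JM: "J * M > 0" using mb(1) Mpos by simp
  have l2: "ln (2::real) > 0" by simp
  define Z where "Z = \<bar>L s1 - L s0\<bar>"
  have gr: "gauss_ratio xs ys = ln 2 * (Z / (J * M))"
    unfolding gauss_ratio_def mxy mxx myy absJ Z_def[symmetric] using l2 by (simp add: field_simps)
  have "1 \<le> Z / (J * M)" using JM bnd by (simp add: pos_le_divide_eq Z_def)
  moreover have "Z / (J * M) \<le> 2" using JM bnd by (simp add: pos_divide_le_eq Z_def mult.assoc)
  ultimately have "ln 2 * 1 \<le> ln 2 * (Z / (J * M)) \<and> ln 2 * (Z / (J * M)) \<le> ln 2 * 2"
    using l2 by (intro conjI mult_left_mono) auto
  thus ?thesis unfolding gr by (simp add: mult.commute)
qed




lemma J_formula:
  fixes q q' Q Q' e :: real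
  assumes q: "q > 0" "0 \<le> q'" "q' \<le> q" and Q: "Q > 0" "0 \<le> Q'" "Q' \<le> Q"
    and e: "e = Q'*q - q'*Q" "e = 1 \<or> e = -1"
  shows "\<bar>(ln (Q + 1*Q') - ln (q + 1*q')) - (ln (Q + 0*Q') - ln (q + 0*q'))\<bar>
       = ln (1 + 1/(if e = 1 then Q*(q+q') else q*(Q+Q')))"
proof (cases "e = 1")
  case True
  have rel: "q * Q' - Q * q' = 1" using e True by (simp add: algebra_simps)
  have "ln (Q+Q') - ln (q+q') - (ln Q - ln q) = ln (((Q+Q')*q) / ((q+q')*Q))"
    using q Q by (simp add: ln_div ln_mult)
  also have "((Q+Q')*q) / ((q+q')*Q) = 1 + 1/(Q*(q+q'))"
  proof -
    have "Q*q + Q*q' > 0" "(q+q')*Q > 0" using q Q by (auto intro: add_pos_nonneg)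
    thus ?thesis using rel q Q by (simp add: field_simps)
  qed
  finally have Jeq: "ln (Q+Q') - ln (q+q') - (ln Q - ln q) = ln (1 + 1/(Q*(q+q')))" .
  have "ln (1 + 1/(Q*(q+q'))) \<ge> 0" using q Q by (simp add: add_pos_nonneg)
  thus ?thesis using Jeq True by simp
next
  case False
  hence em: "e = -1" using e by simp
  have rel: "Q * q' - q * Q' = 1" using e em by (simp add: algebra_simps)
  have "ln (q+q') - ln (Q+Q') - (ln q - ln Q) = ln (((q+q')*Q) / ((Q+Q')*q))"
    using q Q by (simp add: ln_div ln_mult)
  also have "((q+q')*Q) / ((Q+Q')*q) = 1 + 1/(q*(Q+Q'))"
  proof -
    have "q*Q + q*Q' > 0" "(Q+Q')*q > 0" using q Q by (auto intro: add_pos_nonneg)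
    thus ?thesis using rel q Q by (simp add: field_simps)
  qed
  finally have Jeq: "ln (q+q') - ln (Q+Q') - (ln q - ln Q) = ln (1 + 1/(q*(Q+Q')))" .
  have "ln (1 + 1/(q*(Q+Q'))) \<ge> 0" using q Q by (simp add: add_pos_nonneg)
  thus ?thesis using Jeq em by (simp add: abs_minus_commute)
qed

lemma meas_formula:
  assumes "zs \<noteq> []" "pl zs" "mob zs = (A, B, C, D)"
  shows "measure gauss_measure (cylinder zs) =
    ln (1 + 1/(if B*C - A*D = 1 then (A+C)*(C+D) else C*(A+B+C+D))) / ln 2"
proof -
  note px = mob_props[OF assms(2,3)]
  define q where "q = C"
  define q' where "q' = D"
  define Q where "Q = A + C"
  define Q' where "Q' = B + D"
  define e where "e = Q'*q - q'*Q"
  have qs: "q > 0" "0 \<le> q'" "q' \<le> q" using px assms by (auto simp: q_def q'_def)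
  have Qs: "Q > 0" "0 \<le> Q'" "Q' \<le> Q" using px assms by (auto simp: Q_def Q'_def)
  have ee: "e = 1 \<or> e = -1" using px by (auto simp: e_def q_def q'_def Q_def Q'_def algebra_simps)
  have Lpsi: "ln (1 + psi zs t) = ln (Q + t*Q') - ln (q + t*q')" if "t \<ge> 0" for t
  proof -
    have p: "q + t*q' > 0" "Q + t*Q' > 0" using qs Qs that by (auto intro: add_pos_nonneg)
    have "1 + psi zs t = (Q + t*Q') / (q + t*q')"
      using px that p by (simp add: Q_def Q'_def q_def q'_def field_simps)
    thus ?thesis using p by (simp add: ln_div)
  qed
  have "measure gauss_measure (cylinder zs) = \<bar>ln (1 + psi zs 1) - ln (1 + psi zs 0)\<bar> / ln 2"
    using measure_cyl(2)[OF assms(1,2)] .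
  also have "\<bar>ln (1 + psi zs 1) - ln (1 + psi zs 0)\<bar> =
     \<bar>(ln (Q + 1*Q') - ln (q + 1*q')) - (ln (Q + 0*Q') - ln (q + 0*q'))\<bar>"
    using Lpsi[of 1] Lpsi[of 0] by simp
  also have "\<dots> = ln (1 + 1/(if e = 1 then Q*(q+q') else q*(Q+Q')))"
    by (rule J_formula[OF qs Qs e_def ee])
  also have "e = B*C - A*D" by (simp add: e_def q_def q'_def Q_def Q'_def algebra_simps)
  finally show ?thesis by (simp add: Q_def Q'_def q_def q'_def algebra_simps)
qed

lemma pl_simps: "pl [] = True" "pl (a # as) \<longleftrightarrow> a \<ge> 1 \<and> pl as"
  by (auto simp: pl_def)

lemma m1: assumes "n \<ge> 1" shows "measure gauss_measure (cylinder [n]) = ln (1 + 1/(real n*(real n+2))) / ln 2"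
  using meas_formula[of "[n]"] assms by (simp add: pl_simps algebra_simps)

lemma m2: assumes "n \<ge> 1" shows "measure gauss_measure (cylinder [n,n]) = ln (1 + 1/(real n*real n+real n+1)^2) / ln 2"
  using meas_formula[of "[n,n]"] assms by (simp add: pl_simps algebra_simps power2_eq_square)

lemma m3: assumes "n \<ge> 1" shows "measure gauss_measure (cylinder [1,n]) = ln (1 + 1/((real n+2)*(2*real n+1))) / ln 2"
  using meas_formula[of "[1,n]"] assms by (simp add: pl_simps algebra_simps)

lemma m4: assumes "n \<ge> 1" shows "measure gauss_measure (cylinder [n,1,n]) = ln (1 + 1/(real n*(real n+1)*(real n+2)*(real n+3))) / ln 2"
  using meas_formula[of "[n,1,n]"] assms by (simp add: pl_simps algebra_simps)




lemma ratio_help: fixes a b c l :: real assumes "l \<noteq> 0"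
  shows "(a/l)/((b/l)*(c/l)) = l*a/(b*c)"
proof (cases "b * c = 0")
  case True hence "b = 0 \<or> c = 0" by simp
  thus ?thesis by (elim disjE) simp_all
next
  case False thus ?thesis using assms by (simp add: field_simps)
qed

lemma seq_witness:
  fixes E :: "real \<Rightarrow> real"
  assumes lim: "(E \<longlongrightarrow> L) at_top" and ev: "eventually Q (nhds L)"
  shows "\<exists>n::nat. n \<ge> 1 \<and> Q (E (real n))"
proof -
  have "((\<lambda>n. E (real n)) \<longlongrightarrow> L) sequentially"
    using filterlim_compose[OF lim filterlim_real_sequentially] by simp
  hence "eventually (\<lambda>n. Q (E (real n))) sequentially"
    by (rule filterlim_iff[THEN iffD1, rule_format, OF _ ev])
  then obtain N where N: "\<And>n. n \<ge> N \<Longrightarrow> Q (E (real n))" by (auto simp: eventually_sequentially)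
  show ?thesis using N[of "max N 1"] by (intro exI[of _ "max N 1"]) auto
qed

theorem lemma4:
  shows "(\<forall>xs ys. admissible xs \<and> admissible ys \<longrightarrow>
            ln 2 \<le> gauss_ratio xs ys \<and> gauss_ratio xs ys \<le> 2 * ln 2)
       \<and> (\<forall>c. c > ln 2 \<longrightarrow> (\<exists>xs ys. admissible xs \<and> admissible ys \<and> gauss_ratio xs ys < c))
       \<and> (\<forall>c. c < 2 * ln 2 \<longrightarrow> (\<exists>xs ys. admissible xs \<and> admissible ys \<and> gauss_ratio xs ys > c))"
proof (intro conjI allI impI)
  fix xs ys assume "admissible xs \<and> admissible ys"
  thus "ln 2 \<le> gauss_ratio xs ys" "gauss_ratio xs ys \<le> 2 * ln 2" using ratio_bounds by blast+
next
  fix c :: real assume c: "c > ln 2"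
  define E where "E = (\<lambda>x::real. ln 2 * ln(1+1/(x*x+x+1)^2) / (ln(1+1/(x*(x+2))) * ln(1+1/(x*(x+2)))))"
  have lim: "(E \<longlongrightarrow> ln 2) at_top" unfolding E_def by real_asymp
  have ev: "eventually (\<lambda>y. y < c) (nhds (ln 2))" using c by (rule eventually_nhds_in_open[of "{..<c}", simplified]) 
  obtain n :: nat where n: "n \<ge> 1" "E (real n) < c" using seq_witness[OF lim ev] by blast
  have "gauss_ratio [n] [n] = E (real n)"
    unfolding gauss_ratio_def E_def using m1[OF n(1)] m2[OF n(1)] by (simp add: ratio_help)
  moreover have "admissible [n]" using n by (simp add: admissible_def)
  ultimately have "admissible [n] \<and> admissible [n] \<and> gauss_ratio [n] [n] < c" using n(2) by simp
  thus "\<exists>xs ys. admissible xs \<and> admissible ys \<and> gauss_ratio xs ys < c" by blast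
next
  fix c :: real assume c: "c < 2 * ln 2"
  define E where "E = (\<lambda>x::real. ln 2 * ln(1+1/(x*(x+1)*(x+2)*(x+3))) / (ln(1+1/(x*(x+2))) * ln(1+1/((x+2)*(2*x+1)))))"
  have lim: "(E \<longlongrightarrow> 2 * ln 2) at_top" unfolding E_def by real_asymp
  have ev: "eventually (\<lambda>y. y > c) (nhds (2 * ln 2))" using c by (rule eventually_nhds_in_open[of "{c<..}", simplified])
  obtain n :: nat where n: "n \<ge> 1" "E (real n) > c" using seq_witness[OF lim ev] by blast
  have "gauss_ratio [n] [1,n] = E (real n)"
    unfolding gauss_ratio_def E_def using m1[OF n(1)] m3[OF n(1)] m4[OF n(1)] by (simp add: ratio_help)
  moreover have "admissible [n]" "admissible [1,n]" using n by (auto simp: admissible_def nth_Cons split: nat.split)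
  ultimately have "admissible [n] \<and> admissible [1,n] \<and> gauss_ratio [n] [1,n] > c" using n(2) by simp
  thus "\<exists>xs ys. admissible xs \<and> admissible ys \<and> gauss_ratio xs ys > c" by blast
qed


end
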